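(* The coefficient matrix $\mathbf Z_\mathrm{p} = \mathbf M\, \mathbf Q\, \hat{\mathbf Z}\, \mathbf Q\, \mathbf G\, \mathbf P\, \mathbf G^\mathrm{T}\, \mathbf Q\, \hat{\mathbf Z}\, \mathbf Q\, \mathbf M$ of the proposed preconditioned formulation is symmetric, positive-definite.
   Context: Setting: BEM (Galerkin) discretization of the symmetric formulation of the EEG forward problem on $N$ nested, smooth, triangulated surfaces $\Gamma_1,\dots,\Gamma_N$ (piecewise-homogeneous conductivities $\sigma_i$, exterior conductivity zero), with piecewise-linear pyramid functions $\lambda$ on vertices and piecewise-constant patch functions $\pi$ on cells. $\mathbf Z=\begin{pmatrix}\mathbf N & \mathbf D^*\\ \mathbf D & \mathbf S\end{pmatrix}$ is the (symmetric) system matrix of the symmetric formulation (hypersingular, adjoint double-layer, double-layer, single-layer blocks with conductivity-dependent coefficients; last block row/column removed). $\hat{\mathbf Z}=\mathbf Z+\boldsymbol\zeta\boldsymbol\zeta^\mathrm{T}$ is its deflated, invertible version, where $\boldsymbol\zeta$ is zero except for the block $\mathbf G_{N,\lambda\lambda}^\mathrm{T}\mathbf 1$ corresponding to the potential on $\Gamma_N$. $\mathbf Q$ is a diagonal matrix with positive entries $q_{V,i}\sqrt{R_i}$ on the potential unknowns of $\Gamma_i$ and $q_{C,i}/\sqrt{R_i}$ on the current unknowns, with $q_{V,i}=\max(\sigma_i,\sigma_{i+1})^{-1/2}$, $q_{C,i}=\min(\sigma_i,\sigma_{i+1})^{1/2}$ and $R_i>0$ a characteristic size of $\Gamma_i$.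 $\mathbf P$ is block-diagonal with blocks $R_i^{-2}\hat{\mathbf\Delta}_i^{-1}$ ($i=1,\dots,N$) and $R_i^{2}\hat{\tilde{\mathbf\Delta}}_i$ ($i=1,\dots,N-1$), where $\hat{\mathbf\Delta}_i=\mathbf\Delta_i+\mathbf G_{i,\lambda\lambda}^\mathrm{T}\mathbf 1\mathbf 1^\mathrm{T}\mathbf G_{i,\lambda\lambda}$ and $\hat{\tilde{\mathbf\Delta}}_i=\tilde{\mathbf\Delta}_i+\mathbf G_{i,\tilde\lambda\tilde\lambda}^\mathrm{T}\mathbf 1\mathbf 1^\mathrm{T}\mathbf G_{i,\tilde\lambda\tilde\lambda}$ are the (symmetric positive-definite) deflated Laplace–Beltrami stiffness matrices discretized with primal pyramid functions and with dual pyramid functions (on the barycentric dual mesh), respectively; $\mathbf G_{i,fg}$ denotes Gram matrices $(f_{i,m},g_{i,n})_{L^2(\Gamma_i)}$. $\mathbf G$ is block-diagonal with identity blocks on the potential unknowns and blocks $\mathbf G_{i,\tilde\lambda\pi}^{-1}$ on the current unknowns. $\mathbf M$ is block-diagonal with blocks $\mathbf G_{i,\lambda\lambda}^{-1/2}$ and $\mathbf G_{i,\pi\pi}^{-1/2}$. *)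

theory Defs
  imports "HOL-Analysis.Analysis"
begin

text \<open>Unknowns are indexed by 'v + 'c: Inl = potential unknowns (pyramid coefficients
on all surfaces), Inr = current unknowns (patch coefficients on surfaces 1..N-1).\<close>

definition symmetric_mat :: "real^'n^'n \<Rightarrow> bool" where
  "symmetric_mat A \<longleftrightarrow> transpose A = A"

definition pos_def_mat :: "real^'n^'n \<Rightarrow> bool" where
  "pos_def_mat A \<longleftrightarrow> symmetric_mat A \<and> (\<forall>x. x \<noteq> 0 \<longrightarrow> x \<bullet> (A *v x) > 0)"

definition outer :: "real^'n \<Rightarrow> real^'n \<Rightarrow> real^'n^'n" where
  "outer u w = (\<chi> i j. u $ i * w $ j)"

definition diag_pos_mat :: "real^'n^'n \<Rightarrow> bool" where
  "diag_pos_mat Q \<longleftrightarrow> (\<forall>i j. i \<noteq> j \<longrightarrow> Q $ i $ j = 0) \<and> (\<forall>i. Q $ i $ i > 0)"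

text \<open>G = diag(I, B) with B invertible (B = inverse of the dual-primal Gram blocks).\<close>
definition G_structure :: "real^('v::finite + 'c::finite)^('v + 'c) \<Rightarrow> bool" where
  "G_structure G \<longleftrightarrow>
     (\<forall>i j. G $ Inl i $ Inl j = (if i = j then 1 else 0)) \<and>
     (\<forall>i j. G $ Inl i $ Inr j = 0) \<and>
     (\<forall>i j. G $ Inr i $ Inl j = 0) \<and>
     invertible (\<chi> i j. G $ Inr i $ Inr j :: real^'c^'c)"

end

theory Submission
  imports Defs
begin

lemma sum_UNIV_plus:
  fixes f :: "('a::finite + 'b::finite) \<Rightarrow> real"
  shows "sum f UNIV = (\<Sum>i\<in>UNIV. f (Inl i)) + (\<Sum>j\<in>UNIV. f (Inr j))"
proof -
  have "sum f UNIV = sum f (range Inl \<union> range Inr)" by (simp add: UNIV_sum)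
  also have "\<dots> = sum f (range Inl) + sum f (range Inr)"
    by (rule sum.union_disjoint) auto
  also have "\<dots> = (\<Sum>i\<in>UNIV. f (Inl i)) + (\<Sum>j\<in>UNIV. f (Inr j))"
    by (simp add: sum.reindex)
  finally show ?thesis .
qed

lemma inv_inj:
  fixes A :: "real^'n^'n"
  assumes "invertible A" "A *v x = 0" shows "x = 0"
proof -
  obtain B where "B ** A = mat 1" using assms(1) invertible_left_inverse by blast
  then have "x = B *v (A *v x)" by (simp add: matrix_vector_mul_assoc)
  then show ?thesis using assms(2) by simp
qed

lemma pd_inj:
  fixes M :: "real^'n^'n"
  assumes "pos_def_mat M" "M *v x = 0" shows "x = 0"
  using assms unfolding pos_def_mat_def by force

lemma diag_inj:
  fixes Q :: "real^'n^'n"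
  assumes "diag_pos_mat Q" "Q *v x = 0" shows "x = 0"
proof -
  have off: "Q $ i $ j = 0" if "i \<noteq> j" for i j
    using assms(1) that unfolding diag_pos_mat_def by blast
  have pos: "Q $ i $ i > 0" for i
    using assms(1) unfolding diag_pos_mat_def by blast
  have "x $ i = 0" for i
  proof -
    have "(\<Sum>j\<in>UNIV. Q $ i $ j * x $ j) = (\<Sum>j\<in>UNIV. if j = i then Q $ i $ i * x $ i else 0)"
      by (rule sum.cong) (auto simp: off)
    also have "\<dots> = Q $ i $ i * x $ i" by simp
    finally have "(Q *v x) $ i = Q $ i $ i * x $ i" by (simp add: matrix_vector_mult_def)
    then have "Q $ i $ i * x $ i = 0" using assms(2) by simp
    then show ?thesis using pos[of i] by simp
  qed
  then show ?thesis by (simp add: vec_eq_iff)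
qed

lemma diag_sym:
  fixes Q :: "real^'n^'n"
  assumes "diag_pos_mat Q" shows "transpose Q = Q"
proof -
  have "Q $ j $ i = Q $ i $ j" for i j
    using assms by (cases "i = j") (auto simp: diag_pos_mat_def)
  then show ?thesis by (simp add: transpose_def vec_eq_iff)
qed

lemma G_inj:
  fixes G :: "real^('v::finite + 'c::finite)^('v + 'c)"
  assumes "G_structure G" "transpose G *v y = 0" shows "y = 0"
proof -
  define B :: "real^'c^'c" where "B = (\<chi> i j. G $ Inr i $ Inr j)"
  have Binv: "invertible B" using assms(1) unfolding G_structure_def B_def by blast
  have yG: "y v* G = 0" using assms(2) by simp
  have h: "(\<Sum>i\<in>UNIV. y $ i * G $ i $ j) = 0" for j
  proof -
    have "(y v* G) $ j = 0" using yG by simp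
    then show ?thesis by (simp add: vector_matrix_mult_def)
  qed
  have yl: "y $ Inl k = 0" for k
  proof -
    have "(\<Sum>i\<in>UNIV. y $ i * G $ i $ Inl k) = (\<Sum>i\<in>UNIV. y $ Inl i * (if i = k then 1 else 0))"
      using assms(1) unfolding G_structure_def by (simp add: sum_UNIV_plus)
    also have "\<dots> = y $ Inl k" by (simp add: if_distrib cong: if_cong)
    finally show ?thesis using h by simp
  qed
  define yr :: "real^'c" where "yr = (\<chi> i. y $ Inr i)"
  have "transpose B *v yr = 0"
  proof -
    have "(\<Sum>i\<in>UNIV. yr $ i * B $ i $ k) = 0" for k
    proof -
      have "(\<Sum>i\<in>UNIV. y $ i * G $ i $ Inr k) = (\<Sum>i\<in>UNIV. yr $ i * B $ i $ k)"
        using assms(1) yl unfolding G_structure_def B_def yr_def by (simp add: sum_UNIV_plus)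
      then show ?thesis using h by simp
    qed
    then show ?thesis by (simp add: vector_matrix_mult_def vec_eq_iff)
  qed
  then have "yr = 0" using inv_inj transpose_invertible Binv by blast
  then have "y $ Inr k = 0" for k unfolding yr_def by (metis vec_lambda_beta zero_index)
  then have "y $ i = 0" for i using yl by (cases i) auto
  then show ?thesis by (simp add: vec_eq_iff)
qed

lemma congr_pd:
  fixes P B :: "real^'n^'n"
  assumes "pos_def_mat P" "\<And>x. B *v x = 0 \<Longrightarrow> x = 0"
  shows "pos_def_mat (transpose B ** P ** B)"
  unfolding pos_def_mat_def symmetric_mat_def
proof (intro conjI allI impI)
  have "transpose P = P" using assms(1) unfolding pos_def_mat_def symmetric_mat_def by simp
  then show "transpose (transpose B ** P ** B) = transpose B ** P ** B"
    by (simp add: matrix_transpose_mul matrix_mul_assoc)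
next
  fix x :: "real^'n" assume "x \<noteq> 0"
  then have "B *v x \<noteq> 0" using assms(2) by blast
  then have "(B *v x) \<bullet> (P *v (B *v x)) > 0" using assms(1) unfolding pos_def_mat_def by blast
  moreover have "x \<bullet> ((transpose B ** P ** B) *v x) = (B *v x) \<bullet> (P *v (B *v x))"
  proof -
    have "x \<bullet> ((transpose B ** P ** B) *v x) = x \<bullet> (transpose B *v (P *v (B *v x)))"
      by (simp only: matrix_vector_mul_assoc matrix_mul_assoc)
    also have "\<dots> = (x v* transpose B) \<bullet> (P *v (B *v x))"
      by (simp only: dot_lmul_matrix)
    also have "\<dots> = (B *v x) \<bullet> (P *v (B *v x))"
      by (simp only: vector_transpose_matrix)
    finally show ?thesis .
  qed
  ultimately show "x \<bullet> ((transpose B ** P ** B) *v x) > 0" by simp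
qed

theorem proposition1:
  fixes Z P M Q G :: "real^('v::finite + 'c::finite)^('v + 'c)"
    and \<zeta> :: "real^('v + 'c)"
  assumes Z_sym: "symmetric_mat Z"
    and \<zeta>_supp: "\<forall>j. \<zeta> $ Inr j = 0"
    and Zhat_inv: "invertible (Z + outer \<zeta> \<zeta>)"
    and Q_diag: "diag_pos_mat Q"
    and G_str: "G_structure G"
    and P_pd: "pos_def_mat P"
    and M_pd: "pos_def_mat M"
  shows "pos_def_mat (M ** Q ** (Z + outer \<zeta> \<zeta>) ** Q ** G ** P ** transpose G
                       ** Q ** (Z + outer \<zeta> \<zeta>) ** Q ** M)"
proof -
  define Zh where "Zh = Z + outer \<zeta> \<zeta>"
  have Zt: "transpose Zh = Zh"
    using Z_sym unfolding Zh_def symmetric_mat_def outer_def transpose_def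
    by (simp add: vec_eq_iff mult.commute)
  have Mt: "transpose M = M" using M_pd unfolding pos_def_mat_def symmetric_mat_def by simp
  have Qt: "transpose Q = Q" using Q_diag by (rule diag_sym)
  define B where "B = transpose G ** Q ** Zh ** Q ** M"
  have tB: "transpose B = M ** Q ** Zh ** Q ** G"
    unfolding B_def by (simp add: matrix_transpose_mul Zt Mt Qt matrix_mul_assoc)
  have eq: "M ** Q ** Zh ** Q ** G ** P ** transpose G ** Q ** Zh ** Q ** M
      = transpose B ** P ** B"
    by (simp only: tB) (simp only: B_def matrix_mul_assoc)
  have inj: "x = 0" if "B *v x = 0" for x
  proof -
    have "transpose G *v (Q *v (Zh *v (Q *v (M *v x)))) = 0"
      using that unfolding B_def by (simp only: matrix_vector_mul_assoc matrix_mul_assoc)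
    then have "Q *v (Zh *v (Q *v (M *v x))) = 0" by (rule G_inj[OF G_str])
    then have "Zh *v (Q *v (M *v x)) = 0" by (rule diag_inj[OF Q_diag])
    then have "Q *v (M *v x) = 0" by (rule inv_inj[OF Zhat_inv[folded Zh_def]])
    then have "M *v x = 0" by (rule diag_inj[OF Q_diag])
    then show ?thesis by (rule pd_inj[OF M_pd])
  qed
  have "pos_def_mat (transpose B ** P ** B)" by (rule congr_pd[OF P_pd inj])
  then have "pos_def_mat (M ** Q ** Zh ** Q ** G ** P ** transpose G ** Q ** Zh ** Q ** M)"
    by (subst eq)
  then show ?thesis unfolding Zh_def .
qed

end
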